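(* Assume $X$ is a semimartingale. Define the predictable set $$\Gamma^-:=\{(\omega,t,x): t<\tau(\omega),\ X_{t-}(\omega)=b(t),\ x<0\}.$$ If $\mathbf 1_{\Gamma^-}*\nu^X\equiv0$, then (almost surely) for every finite $t\ge0$, $\sup_{0\le s\le t}Y_s<0$ on $\{\tau>t\}$.
   Context: Let $(\Omega,\mathcal F,\mathbb F=(\mathcal F_t)_{t\ge0},\mathbb P)$ be a filtered probability space satisfying the usual conditions. Let $X$ be a real-valued $\mathbb F$-semimartingale (càdlàg) and $b:[0,\infty)\to\mathbb R$ a continuous deterministic function, with $X_0<b(0)$ identically. $X_{t-}$ denotes the left limit. Let $\mu^X(dt,dx):=\sum_{s>0:\Delta X_s\ne0}\delta_{(s,\Delta X_s)}(dt,dx)$ be the jump measure of $X$ and $\nu^X$ its predictable compensator. For a function $W\ge0$ on $\Omega\times[0,\infty)\times\mathbb R$, $(W*\mu)_t:=\int_0^t\int_{\mathbb R}W(s,x)\,\mu(ds,dx)$; "$\equiv0$" means identically zero up to evanescence. Set $Y_t:=X_t-b(t)$ and $\tau:=\inf\{t\ge0:Y_t\ge0\}$ ($\inf\emptyset=\infty$). *)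

theory Defs
  imports "HOL-Probability.Probability"
begin

definition usual_filtration :: "'a measure \<Rightarrow> (real \<Rightarrow> 'a measure) \<Rightarrow> bool" where
  "usual_filtration M F \<longleftrightarrow> prob_space M
     \<and> (\<forall>t\<ge>0. space (F t) = space M \<and> sets (F t) \<subseteq> sets M)
     \<and> (\<forall>s t. 0 \<le> s \<longrightarrow> s \<le> t \<longrightarrow> sets (F s) \<subseteq> sets (F t))
     \<and> (\<forall>t\<ge>0. sets (F t) = (\<Inter>s\<in>{t<..}. sets (F s)))
     \<and> (\<forall>N\<in>null_sets M. \<forall>A. A \<subseteq> N \<longrightarrow> A \<in> sets (F 0))"

definition cadlag :: "(real \<Rightarrow> real) \<Rightarrow> bool" where
  "cadlag f \<longleftrightarrow> (\<forall>t\<ge>0. continuous (at_right t) f) \<and> (\<forall>t>0. \<exists>l. (f \<longlongrightarrow> l) (at_left t))"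

text \<open>Left limit, with the usual convention f(0-) = f(0).\<close>
definition left_lim :: "(real \<Rightarrow> real) \<Rightarrow> real \<Rightarrow> real" where
  "left_lim f t = (if t \<le> 0 then f 0 else Lim (at_left t) f)"

definition jump :: "(real \<Rightarrow> real) \<Rightarrow> real \<Rightarrow> real" where
  "jump f t = f t - left_lim f t"

definition adapted :: "'a measure \<Rightarrow> (real \<Rightarrow> 'a measure) \<Rightarrow> (real \<Rightarrow> 'a \<Rightarrow> real) \<Rightarrow> bool" where
  "adapted M F X \<longleftrightarrow> (\<forall>t\<ge>0. X t \<in> borel_measurable (F t))"

definition cadlag_process :: "'a measure \<Rightarrow> (real \<Rightarrow> 'a \<Rightarrow> real) \<Rightarrow> bool" where
  "cadlag_process M X \<longleftrightarrow> (\<forall>\<omega>\<in>space M. cadlag (\<lambda>t. X t \<omega>))"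

definition stopping_time_R :: "'a measure \<Rightarrow> (real \<Rightarrow> 'a measure) \<Rightarrow> ('a \<Rightarrow> real) \<Rightarrow> bool" where
  "stopping_time_R M F T \<longleftrightarrow> (\<forall>\<omega>\<in>space M. 0 \<le> T \<omega>)
     \<and> (\<forall>t\<ge>0. {\<omega>\<in>space M. T \<omega> \<le> t} \<in> sets (F t))"

definition martingale :: "'a measure \<Rightarrow> (real \<Rightarrow> 'a measure) \<Rightarrow> (real \<Rightarrow> 'a \<Rightarrow> real) \<Rightarrow> bool" where
  "martingale M F L \<longleftrightarrow> adapted M F L \<and> (\<forall>t\<ge>0. integrable M (L t))
     \<and> (\<forall>s t. 0 \<le> s \<longrightarrow> s \<le> t \<longrightarrow> (AE \<omega> in M. real_cond_exp M (F s) (L t) \<omega> = L s \<omega>))"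

definition local_martingale :: "'a measure \<Rightarrow> (real \<Rightarrow> 'a measure) \<Rightarrow> (real \<Rightarrow> 'a \<Rightarrow> real) \<Rightarrow> bool" where
  "local_martingale M F L \<longleftrightarrow> adapted M F L \<and> cadlag_process M L
     \<and> (\<exists>T :: nat \<Rightarrow> 'a \<Rightarrow> real.
          (\<forall>n. stopping_time_R M F (T n))
        \<and> (\<forall>\<omega>\<in>space M. incseq (\<lambda>n. T n \<omega>))
        \<and> (AE \<omega> in M. filterlim (\<lambda>n. T n \<omega>) at_top sequentially)
        \<and> (\<forall>n. martingale M F (\<lambda>t \<omega>. L (min t (T n \<omega>)) \<omega>)))"

definition finite_variation_on :: "(real \<Rightarrow> real) \<Rightarrow> real \<Rightarrow> real \<Rightarrow> bool" where
  "finite_variation_on f a b \<longleftrightarrow>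
     bdd_above {(\<Sum>i<n. \<bar>f (p (Suc i)) - f (p i)\<bar>) | p n. p 0 = a \<and> p n = b \<and> incseq p}"

definition semimartingale :: "'a measure \<Rightarrow> (real \<Rightarrow> 'a measure) \<Rightarrow> (real \<Rightarrow> 'a \<Rightarrow> real) \<Rightarrow> bool" where
  "semimartingale M F X \<longleftrightarrow> adapted M F X \<and> cadlag_process M X
     \<and> (\<exists>L A. local_martingale M F L \<and> (\<forall>\<omega>\<in>space M. L 0 \<omega> = 0)
        \<and> adapted M F A \<and> cadlag_process M A
        \<and> (\<forall>\<omega>\<in>space M. A 0 \<omega> = 0 \<and> (\<forall>t\<ge>0. finite_variation_on (\<lambda>s. A s \<omega>) 0 t))
        \<and> (\<forall>\<omega>\<in>space M. \<forall>t\<ge>0. X t \<omega> = X 0 \<omega> + L t \<omega> + A t \<omega>))"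

definition pred_sigma :: "'a measure \<Rightarrow> (real \<Rightarrow> 'a measure) \<Rightarrow> ('a \<times> real) measure" where
  "pred_sigma M F = sigma (space M \<times> {0..})
     ({A \<times> {0} | A. A \<in> sets (F 0)} \<union> {A \<times> {s<..t} | A s t. 0 \<le> s \<and> s \<le> t \<and> A \<in> sets (F s)})"

definition predictable_fun :: "'a measure \<Rightarrow> (real \<Rightarrow> 'a measure) \<Rightarrow> ('a \<Rightarrow> real \<Rightarrow> real \<Rightarrow> ennreal) \<Rightarrow> bool" where
  "predictable_fun M F W \<longleftrightarrow>
     (\<lambda>((\<omega>, t), x). W \<omega> t x) \<in> borel_measurable (pred_sigma M F \<Otimes>\<^sub>M (borel :: real measure))"

text \<open>Random measures are families of measures on (time, mark) = R x R.
  (W * rho)_t (omega) and (W * rho)_oo (omega).\<close>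
definition rm_int :: "('a \<Rightarrow> real \<Rightarrow> real \<Rightarrow> ennreal) \<Rightarrow> ('a \<Rightarrow> (real \<times> real) measure) \<Rightarrow> 'a \<Rightarrow> real \<Rightarrow> ennreal" where
  "rm_int W \<rho> \<omega> t = (\<integral>\<^sup>+ z. indicator {0..t} (fst z) * W \<omega> (fst z) (snd z) \<partial>\<rho> \<omega>)"

definition rm_int_inf :: "('a \<Rightarrow> real \<Rightarrow> real \<Rightarrow> ennreal) \<Rightarrow> ('a \<Rightarrow> (real \<times> real) measure) \<Rightarrow> 'a \<Rightarrow> ennreal" where
  "rm_int_inf W \<rho> \<omega> = (\<integral>\<^sup>+ z. indicator {0..} (fst z) * W \<omega> (fst z) (snd z) \<partial>\<rho> \<omega>)"

text \<open>Jump measure mu^X(omega) = sum over s>0 with Delta X_s /= 0 of Dirac at (s, Delta X_s).\<close>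
definition jump_measure :: "(real \<Rightarrow> 'a \<Rightarrow> real) \<Rightarrow> 'a \<Rightarrow> (real \<times> real) measure" where
  "jump_measure X \<omega> = measure_of UNIV (sets (borel :: (real \<times> real) measure))
     (\<lambda>A. \<integral>\<^sup>+ s. indicator A (s, jump (\<lambda>t. X t \<omega>) s)
            \<partial>count_space {s. 0 < s \<and> jump (\<lambda>t. X t \<omega>) s \<noteq> 0})"

definition predictable_random_measure :: "'a measure \<Rightarrow> (real \<Rightarrow> 'a measure) \<Rightarrow> ('a \<Rightarrow> (real \<times> real) measure) \<Rightarrow> bool" where
  "predictable_random_measure M F \<nu> \<longleftrightarrow>
     (\<forall>\<omega>\<in>space M. sets (\<nu> \<omega>) = sets (borel :: (real \<times> real) measure)
                  \<and> emeasure (\<nu> \<omega>) ({..0} \<times> UNIV) = 0)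
     \<and> (\<forall>W. predictable_fun M F W \<longrightarrow>
           (\<lambda>(\<omega>, t). rm_int W \<nu> \<omega> t) \<in> borel_measurable (pred_sigma M F))"

text \<open>Predictable compensator (Jacod--Shiryaev II.1.8).\<close>
definition compensator :: "'a measure \<Rightarrow> (real \<Rightarrow> 'a measure) \<Rightarrow> ('a \<Rightarrow> (real \<times> real) measure)
    \<Rightarrow> ('a \<Rightarrow> (real \<times> real) measure) \<Rightarrow> bool" where
  "compensator M F \<mu> \<nu> \<longleftrightarrow> predictable_random_measure M F \<nu>
     \<and> (\<forall>W. predictable_fun M F W \<longrightarrow>
           (\<integral>\<^sup>+ \<omega>. rm_int_inf W \<mu> \<omega> \<partial>M) = (\<integral>\<^sup>+ \<omega>. rm_int_inf W \<nu> \<omega> \<partial>M))"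

text \<open>tau = inf {t >= 0 : X_t - b(t) >= 0}, with inf of the empty set = oo.\<close>
definition hit_time :: "(real \<Rightarrow> 'a \<Rightarrow> real) \<Rightarrow> (real \<Rightarrow> real) \<Rightarrow> 'a \<Rightarrow> ereal" where
  "hit_time X b \<omega> = (INF t \<in> {t. 0 \<le> t \<and> X t \<omega> - b t \<ge> 0}. ereal t)"

definition Gamma_minus :: "'a measure \<Rightarrow> (real \<Rightarrow> 'a \<Rightarrow> real) \<Rightarrow> (real \<Rightarrow> real) \<Rightarrow> ('a \<times> real \<times> real) set" where
  "Gamma_minus M X b = {(\<omega>, t, x). \<omega> \<in> space M \<and> 0 \<le> t \<and> ereal t < hit_time X b \<omega>
       \<and> left_lim (\<lambda>s. X s \<omega>) t = b t \<and> x < 0}"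

end

theory Submission
  imports Defs
begin
definition dy :: "nat \<Rightarrow> nat \<Rightarrow> real" where "dy k n = real k / 2^n"

lemma dy_nonneg: "0 \<le> dy k n" by (simp add: dy_def)

lemma dy_dense:
  assumes "0 < b" "a < b"
  shows "\<exists>k n. a < dy k n \<and> dy k n < b"
proof (cases "a < 0")
  case True
  then show ?thesis using assms by (intro exI[of _ 0]) (auto simp: dy_def)
next
  case False
  obtain n where n: "(1/2::real)^n < b - a" using real_arch_pow_inv[of "b-a" "1/2::real"] assms by auto
  define k where "k = nat (floor (a * 2^n)) + 1"
  have p: "(0::real) < 2^n" by simp
  have k1: "real k = real_of_int (floor (a * 2^n)) + 1" using False by (simp add: k_def)
  have "a * 2^n < real k" using k1 by linarith
  hence "a < dy k n" using p by (simp add: dy_def field_simps)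
  moreover have "real k \<le> a * 2^n + 1" using k1 by linarith
  hence "dy k n \<le> a + 1/2^n" using p by (simp add: dy_def field_simps)
  moreover have "(1/2::real)^n = 1/2^n" by (simp add: power_divide)
  ultimately show ?thesis using n by (intro exI[of _ k] exI[of _ n]) auto
qed

lemma b_right:
  assumes bc: "continuous_on {0..} b" and s: "0 \<le> (s::real)"
  shows "(b \<longlongrightarrow> b s) (at_right s)"
proof -
  have "(b \<longlongrightarrow> b s) (at s within {0..})" using bc s by (simp add: continuous_on_def)
  thus ?thesis by (rule tendsto_within_subset) (use s in auto)
qed

lemma b_left:
  assumes bc: "continuous_on {0..} b" and s: "0 < (s::real)"
  shows "(b \<longlongrightarrow> b s) (at_left s)"
proof -
  have "isCont b s" using continuous_on_interior[OF bc] s by simp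
  thus ?thesis by (simp add: isCont_def filterlim_at_split)
qed

lemma pathwise:
  fixes f b :: "real \<Rightarrow> real"
  assumes cad: "cadlag f" and bc: "continuous_on {0..} b" and t0: "0 \<le> t"
    and neg: "\<forall>s\<in>{0..t}. f s - b s < 0"
    and nsup: "\<not> (SUP s\<in>{0..t}. f s - b s) < 0"
  shows "\<exists>u. 0 < u \<and> u \<le> t \<and> left_lim f u = b u \<and>
     (\<forall>r. 0 \<le> r \<and> r < u \<longrightarrow> (\<exists>m::nat. \<forall>q. 0 \<le> q \<and> q \<le> r \<longrightarrow> f q - b q \<le> - 1 / (real m + 1)))"
proof -
  define Y where "Y s = f s - b s" for s
  have Yr: "(Y \<longlongrightarrow> Y s) (at_right s)" if "0 \<le> s" for s
  proof -
    have "continuous (at_right s) f" using cad that by (simp add: cadlag_def)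
    hence "(f \<longlongrightarrow> f s) (at_right s)" by (simp add: continuous_within)
    thus ?thesis unfolding Y_def using b_right[OF bc that] by (intro tendsto_diff)
  qed
  define T where "T = {v. 0 \<le> v \<and> v \<le> t \<and> (\<exists>e>0. \<forall>q. 0 \<le> q \<and> q \<le> v \<longrightarrow> Y q \<le> - e)}"
  have negY: "Y s < 0" if "0 \<le> s" "s \<le> t" for s using neg that by (auto simp: Y_def)
  have T0: "0 \<in> T" unfolding T_def using t0 negY[of 0] by (auto intro!: exI[of _ "- Y 0"])
  have Tbdd: "bdd_above T" unfolding T_def by (auto intro!: bdd_aboveI[of _ t])
  have Tdown: "w \<in> T" if "v \<in> T" "0 \<le> w" "w \<le> v" for v w
    using that unfolding T_def by (auto 4 4)
  define u where "u = Sup T"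
  have u0: "0 \<le> u" unfolding u_def using cSup_upper[OF T0 Tbdd] .
  have ut: "u \<le> t" unfolding u_def using T0 by (intro cSup_least) (auto simp: T_def)
  have below: "r \<in> T" if rr: "0 \<le> r" "r < u" for r
  proof -
    obtain v where "v \<in> T" "r < v" using less_cSupD[of T r] T0 rr unfolding u_def by blast
    thus ?thesis using Tdown rr by auto
  qed
  have unotT: "u \<notin> T"
  proof
    assume uT: "u \<in> T"
    then obtain e where e: "e > 0" "\<forall>q. 0 \<le> q \<and> q \<le> u \<longrightarrow> Y q \<le> - e" unfolding T_def by auto
    show False
    proof (cases "u = t")
      case True
      have "(SUP s\<in>{0..t}. f s - b s) \<le> - e"
        using e True t0 by (intro cSUP_least) (auto simp: Y_def)
      thus False using nsup e by linarith
    next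
      case False
      hence ult: "u < t" using ut by auto
      have Yu: "Y u < 0" using negY u0 ut by auto
      have "eventually (\<lambda>x. Y x < Y u / 2) (at_right u)"
        using Yr[OF u0] Yu by (intro order_tendstoD) auto
      then obtain b' where b': "b' > u" "\<forall>y>u. y < b' \<longrightarrow> Y y < Y u / 2"
        unfolding eventually_at_right_field by auto
      define v where "v = min t ((u + b') / 2)"
      have "v \<in> T" unfolding T_def
      proof (intro CollectI conjI exI[of _ "min e (- Y u / 2)"] allI impI)
        show "0 \<le> v" "v \<le> t" using u0 ult b' by (auto simp: v_def)
        show "0 < min e (- Y u / 2)" using e Yu by auto
        fix q assume q: "0 \<le> q \<and> q \<le> v"
        show "Y q \<le> - min e (- Y u / 2)"
        proof (cases "q \<le> u")
          case True thus ?thesis using e q by auto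
        next
          case False
          have "q < b'" using q b' by (auto simp: v_def)
          hence "Y q < Y u / 2" using b' False by auto
          thus ?thesis by linarith
        qed
      qed
      moreover have "u < v" using ult b' by (auto simp: v_def)
      ultimately show False using cSup_upper[OF _ Tbdd] unfolding u_def by force
    qed
  qed
  have upos: "0 < u" using u0 unotT T0 by (cases "u = 0") auto
  obtain l where l: "(f \<longlongrightarrow> l) (at_left u)" using cad upos by (auto simp: cadlag_def)
  have Yl: "(Y \<longlongrightarrow> l - b u) (at_left u)" unfolding Y_def using l b_left[OF bc upos] by (intro tendsto_diff)
  have "l - b u \<le> 0"
  proof (rule tendsto_upperbound[OF Yl])
    show "at_left u \<noteq> bot" by simp
    show "\<forall>\<^sub>F x in at_left u. Y x \<le> 0" unfolding eventually_at_left_field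
      using upos ut negY by (intro exI[of _ 0]) (auto intro: less_imp_le)
  qed
  moreover have "\<not> l - b u < 0"
  proof
    assume lneg: "l - b u < 0"
    have "eventually (\<lambda>x. Y x < (l - b u) / 2) (at_left u)"
      using Yl lneg by (intro order_tendstoD) auto
    then obtain b1 where b1: "b1 < u" "\<forall>y>b1. y < u \<longrightarrow> Y y < (l - b u) / 2"
      unfolding eventually_at_left_field by auto
    define w where "w = max ((b1 + u) / 2) 0"
    have w: "0 \<le> w" "w < u" "b1 < w" using b1(1) upos unfolding w_def by (auto simp: max_def)
    then obtain ew where ew: "ew > 0" "\<forall>q. 0 \<le> q \<and> q \<le> w \<longrightarrow> Y q \<le> - ew"
      using below[of w] unfolding T_def by auto
    have Yu: "Y u < 0" using negY u0 ut by auto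
    have "u \<in> T" unfolding T_def
    proof (intro CollectI conjI exI[of _ "min ew (min (- (l - b u) / 2) (- Y u))"] allI impI)
      show "0 \<le> u" "u \<le> t" using u0 ut by auto
      show "0 < min ew (min (- (l - b u) / 2) (- Y u))" using ew lneg Yu by auto
      fix q assume q: "0 \<le> q \<and> q \<le> u"
      show "Y q \<le> - min ew (min (- (l - b u) / 2) (- Y u))"
      proof (cases "q \<le> w")
        case True thus ?thesis using ew q by auto
      next
        case False
        show ?thesis
        proof (cases "q = u")
          case True thus ?thesis by auto
        next
          case False2: False
          hence "Y q < (l - b u) / 2" using b1 w False q by auto
          thus ?thesis by linarith
        qed
      qed
    qed
    thus False using unotT by simp
  qed
  ultimately have lb: "l = b u" by linarith
  have "left_lim f u = b u" unfolding left_lim_def using upos l lb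
    by (simp add: tendsto_Lim)
  moreover have "\<exists>m::nat. \<forall>q. 0 \<le> q \<and> q \<le> r \<longrightarrow> f q - b q \<le> - 1 / (real m + 1)"
    if rr: "0 \<le> r" "r < u" for r
  proof -
    obtain e where e: "e > 0" "\<forall>q. 0 \<le> q \<and> q \<le> r \<longrightarrow> Y q \<le> - e"
      using below[OF rr] unfolding T_def by auto
    obtain m where m: "inverse (real (Suc m)) < e" using reals_Archimedean[OF e(1)] by auto
    have "1 / (real m + 1) \<le> e" using m by (simp add: field_simps inverse_eq_divide)
    thus ?thesis using e by (intro exI[of _ m]) (auto simp: Y_def intro: order_trans)
  qed
  ultimately show ?thesis using upos ut by blast
qed

lemma jump_measure_distr:
  "jump_measure X \<omega> = distr (count_space {s. 0 < s \<and> jump (\<lambda>t. X t \<omega>) s \<noteq> 0}) borel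
      (\<lambda>s. (s, jump (\<lambda>t. X t \<omega>) s))"
proof -
  define S where "S = {s. 0 < s \<and> jump (\<lambda>t. X t \<omega>) s \<noteq> 0}"
  define g where "g s = (s, jump (\<lambda>t. X t \<omega>) s)" for s
  have "(\<lambda>A. \<integral>\<^sup>+ s. indicator A (g s) \<partial>count_space S)
      = (\<lambda>A. emeasure (count_space S) (g -` A \<inter> space (count_space S)))"
  proof
    fix A
    have "(\<integral>\<^sup>+ s. indicator A (g s) \<partial>count_space S) = (\<integral>\<^sup>+ s. indicator (g -` A \<inter> S) s \<partial>count_space S)"
      by (intro nn_integral_cong) (auto split: split_indicator)
    also have "\<dots> = emeasure (count_space S) (g -` A \<inter> S)"
      by (intro nn_integral_indicator) auto
    finally show "(\<integral>\<^sup>+ s. indicator A (g s) \<partial>count_space S) = emeasure (count_space S) (g -` A \<inter> space (count_space S))"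
      by simp
  qed
  thus ?thesis unfolding jump_measure_def distr_def S_def[symmetric] g_def[symmetric]
    by simp
qed

lemma rm_int_inf_jump_lb:
  assumes "0 < s0" "jump (\<lambda>t. X t \<omega>) s0 \<noteq> 0"
  shows "W \<omega> s0 (jump (\<lambda>t. X t \<omega>) s0) \<le> rm_int_inf W (jump_measure X) \<omega>"
proof -
  define S where "S = {s. 0 < s \<and> jump (\<lambda>t. X t \<omega>) s \<noteq> 0}"
  define g where "g s = (s, jump (\<lambda>t. X t \<omega>) s)" for s
  define N where "N = distr (count_space S) borel g"
  have gm: "g \<in> measurable (count_space S) borel"
    by (rule measurableI) auto
  have s0S: "s0 \<in> S" using assms by (simp add: S_def)
  have pre: "g -` {g s0} \<inter> space (count_space S) = {s0}" using s0S by (auto simp: g_def)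
  have em: "emeasure N {g s0} = 1"
    unfolding N_def using gm pre s0S by (subst emeasure_distr) auto
  have "W \<omega> s0 (jump (\<lambda>t. X t \<omega>) s0) = (\<integral>\<^sup>+ z. W \<omega> s0 (jump (\<lambda>t. X t \<omega>) s0) * indicator {g s0} z \<partial>N)"
    using em by (subst nn_integral_cmult_indicator) (auto simp: N_def)
  also have "\<dots> \<le> (\<integral>\<^sup>+ z. indicator {0..} (fst z) * W \<omega> (fst z) (snd z) \<partial>N)"
    using assms by (intro nn_integral_mono) (auto simp: g_def split: split_indicator)
  also have "\<dots> = rm_int_inf W (jump_measure X) \<omega>"
    unfolding rm_int_inf_def jump_measure_distr N_def S_def g_def ..
  finally show ?thesis .
qed

lemma pred_sigma_space: "space (pred_sigma M F) = space M \<times> {0..}"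
  unfolding pred_sigma_def by (simp add: space_measure_of_conv)

lemma pred_gen_subset:
  fixes F :: "real \<Rightarrow> 'a measure"
  assumes "\<forall>t\<ge>0. space (F t) = space M"
  shows "({A \<times> {0} | A. A \<in> sets (F 0)} \<union> {A \<times> {s<..t} | A s t. 0 \<le> s \<and> s \<le> t \<and> A \<in> sets (F s)})
      \<subseteq> Pow (space M \<times> {0..})"
proof -
  have h: "A \<subseteq> space M" if "A \<in> sets (F s)" "0 \<le> s" for A s
    using sets.sets_into_space[OF that(1)] assms that(2) by auto
  show ?thesis
  proof
    fix Z assume "Z \<in> {A \<times> {0} | A. A \<in> sets (F 0)} \<union> {A \<times> {s<..t} | A s t. 0 \<le> s \<and> s \<le> t \<and> A \<in> sets (F s)}"
    then consider (a) A where "Z = A \<times> {0}" "A \<in> sets (F 0)"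
      | (b) A s t where "Z = A \<times> {s<..t}" "0 \<le> s" "A \<in> sets (F s)" by blast
    then show "Z \<in> Pow (space M \<times> {0..})"
    proof cases
      case a thus ?thesis using h[of A 0] by auto
    next
      case b thus ?thesis using h[of A s] by auto
    qed
  qed
qed

lemma pred_sets_gen:
  fixes F :: "real \<Rightarrow> 'a measure"
  assumes "\<forall>t\<ge>0. space (F t) = space M" "A \<in> sets (F s)" "0 \<le> s" "s \<le> t"
  shows "A \<times> {s<..t} \<in> sets (pred_sigma M F)"
  unfolding pred_sigma_def
  by (rule in_measure_of[OF pred_gen_subset[OF assms(1)]]) (use assms(2-4) in blast)

lemma pred_atom:
  fixes F :: "real \<Rightarrow> 'a measure"
  assumes sp: "\<forall>t\<ge>0. space (F t) = space M" and d: "0 \<le> d"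
    and Q: "{\<omega> \<in> space M. Q \<omega>} \<in> sets (F d)"
  shows "Measurable.pred (pred_sigma M F) (\<lambda>x. d < snd x \<and> Q (fst x))"
proof -
  have "{x \<in> space (pred_sigma M F). d < snd x \<and> Q (fst x)}
      = (\<Union>n::nat. {\<omega> \<in> space M. Q \<omega>} \<times> {d<..d + real n})"
  proof (intro equalityI subsetI)
    fix x assume "x \<in> {x \<in> space (pred_sigma M F). d < snd x \<and> Q (fst x)}"
    then obtain \<omega> t where x: "x = (\<omega>, t)" "\<omega> \<in> space M" "Q \<omega>" "d < t"
      unfolding pred_sigma_space by auto
    obtain n where "t - d \<le> real n" using real_arch_simple by blast
    thus "x \<in> (\<Union>n::nat. {\<omega> \<in> space M. Q \<omega>} \<times> {d<..d + real n})"
      using x by (intro UN_I[of n]) auto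
  next
    fix x assume "x \<in> (\<Union>n::nat. {\<omega> \<in> space M. Q \<omega>} \<times> {d<..d + real n})"
    thus "x \<in> {x \<in> space (pred_sigma M F). d < snd x \<and> Q (fst x)}"
      unfolding pred_sigma_space using d by auto
  qed
  also have "\<dots> \<in> sets (pred_sigma M F)"
    using pred_sets_gen[OF sp Q d] by auto
  finally show ?thesis unfolding pred_def .
qed

lemma pred_le_c: "(f :: 'a \<Rightarrow> real) \<in> borel_measurable N \<Longrightarrow> Measurable.pred N (\<lambda>x. f x \<le> c)"
  unfolding pred_def by (rule borel_measurable_le) auto
lemma pred_abs_le_c: "(f :: 'a \<Rightarrow> real) \<in> borel_measurable N \<Longrightarrow> Measurable.pred N (\<lambda>x. \<bar>f x\<bar> \<le> c)"
  by (rule pred_le_c) (rule borel_measurable_abs)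
lemma meas_diff_c: "(f :: 'a \<Rightarrow> real) \<in> borel_measurable N \<Longrightarrow> (\<lambda>x. f x - c) \<in> borel_measurable N"
  by (rule borel_measurable_diff) auto

definition G :: "(real \<Rightarrow> 'a \<Rightarrow> real) \<Rightarrow> (real \<Rightarrow> real) \<Rightarrow> 'a \<Rightarrow> real \<Rightarrow> bool" where
  "G X b \<omega> r \<longleftrightarrow> (\<exists>m::nat. \<forall>k n. dy k n \<le> r \<longrightarrow> X (dy k n) \<omega> - b (dy k n) \<le> - 1 / (real m + 1))"

definition LL :: "(real \<Rightarrow> 'a \<Rightarrow> real) \<Rightarrow> (real \<Rightarrow> real) \<Rightarrow> 'a \<Rightarrow> real \<Rightarrow> bool" where
  "LL X b \<omega> t \<longleftrightarrow> (\<forall>m::nat. \<exists>k n. dy k n < t \<and> (\<forall>k' n'. dy k n < dy k' n' \<longrightarrow> dy k' n' < t \<longrightarrow>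
      \<bar>X (dy k' n') \<omega> - b (dy k' n')\<bar> \<le> 1 / (real m + 1)))"

definition p1 :: "(real \<Rightarrow> 'a \<Rightarrow> real) \<Rightarrow> (real \<Rightarrow> real) \<Rightarrow> 'a \<Rightarrow> real \<Rightarrow> bool" where
  "p1 X b \<omega> t \<longleftrightarrow> 0 < t \<and> LL X b \<omega> t \<and> (\<forall>k n. dy k n < t \<longrightarrow> G X b \<omega> (dy k n))"

lemma uf_space: "usual_filtration M F \<Longrightarrow> 0 \<le> t \<Longrightarrow> space (F t) = space M"
  unfolding usual_filtration_def by (drule conjunct2, drule conjunct1) simp
lemma uf_sets: "usual_filtration M F \<Longrightarrow> 0 \<le> t \<Longrightarrow> sets (F t) \<subseteq> sets M"
  unfolding usual_filtration_def by (drule conjunct2, drule conjunct1) simp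
lemma uf_mono: "usual_filtration M F \<Longrightarrow> 0 \<le> s \<Longrightarrow> s \<le> t \<Longrightarrow> sets (F s) \<subseteq> sets (F t)"
  unfolding usual_filtration_def by (drule conjunct2, drule conjunct2, drule conjunct1) simp
lemma uf_prob: "usual_filtration M F \<Longrightarrow> prob_space M"
  unfolding usual_filtration_def by (drule conjunct1)

lemma X_meas_F:
  assumes "usual_filtration M F" "adapted M F X" "0 \<le> s" "s \<le> d"
  shows "X s \<in> borel_measurable (F d)"
proof -
  have "subalgebra (F d) (F s)" unfolding subalgebra_def
    using uf_space[OF assms(1), of s] uf_space[OF assms(1), of d] uf_mono[OF assms(1,3,4)] assms(3,4) by simp
  moreover have "X s \<in> borel_measurable (F s)" using assms(2,3) by (simp add: adapted_def)
  ultimately show ?thesis by (rule measurable_from_subalg)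
qed

lemma X_meas_M:
  assumes "usual_filtration M F" "adapted M F X" "0 \<le> s"
  shows "X s \<in> borel_measurable M"
proof -
  have "subalgebra M (F s)" unfolding subalgebra_def
    using uf_space[OF assms(1,3)] uf_sets[OF assms(1,3)] by simp
  moreover have "X s \<in> borel_measurable (F s)" using assms(2,3) by (simp add: adapted_def)
  ultimately show ?thesis by (rule measurable_from_subalg)
qed

lemma F_set:
  assumes "usual_filtration M F" "0 \<le> d" "Measurable.pred (F d) Q"
  shows "{\<omega> \<in> space M. Q \<omega>} \<in> sets (F d)"
  using predE[OF assms(3)] uf_space[OF assms(1,2)] by simp

lemma G_pred_F:
  assumes uf: "usual_filtration M F" and ad: "adapted M F X" and d: "0 \<le> d"
  shows "Measurable.pred (F d) (\<lambda>\<omega>. G X b \<omega> d)"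
  unfolding G_def
proof (intro pred_intros_countable allI pred_intros_imp')
  fix m k n assume "dy k n \<le> d"
  hence "X (dy k n) \<in> borel_measurable (F d)" using X_meas_F[OF uf ad dy_nonneg] by auto
  thus "Measurable.pred (F d) (\<lambda>x. X (dy k n) x - b (dy k n) \<le> - 1 / (real m + 1))"
    by (intro pred_le_c meas_diff_c)
qed

lemma p1_pred:
  assumes uf: "usual_filtration M F" and ad: "adapted M F X"
  shows "Measurable.pred (pred_sigma M F) (\<lambda>x. p1 X b (fst x) (snd x))"
proof -
  have sp: "\<forall>t\<ge>0. space (F t) = space M" using uf_space[OF uf] by blast
  have sM: "space M \<in> sets (F d)" if "0 \<le> d" for d using sp that sets.top[of "F d"] by simp
  have eq: "p1 X b \<omega> t \<longleftrightarrow>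
     (0 < t \<and> True) \<and>
     (\<forall>m::nat. \<exists>k n. (dy k n < t \<and> True) \<and> (\<forall>k' n'. dy k n < dy k' n' \<longrightarrow>
         \<not> (dy k' n' < t \<and> \<not> \<bar>X (dy k' n') \<omega> - b (dy k' n')\<bar> \<le> 1 / (real m + 1)))) \<and>
     (\<forall>k n. \<not> (dy k n < t \<and> \<not> G X b \<omega> (dy k n)))" for \<omega> t
    unfolding p1_def LL_def by simp
  have a0: "Measurable.pred (pred_sigma M F) (\<lambda>x. 0 < snd x \<and> True)"
    using pred_atom[OF sp order_refl, of "\<lambda>_. True"] sM[of 0] by simp
  have a1: "Measurable.pred (pred_sigma M F) (\<lambda>x. dy k n < snd x \<and> True)" for k n
    using pred_atom[OF sp dy_nonneg, of "\<lambda>_. True"] sM[OF dy_nonneg] by simp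
  have a2: "Measurable.pred (pred_sigma M F) (\<lambda>x. dy k n < snd x \<and> \<not> \<bar>X (dy k n) (fst x) - b (dy k n)\<bar> \<le> c)" for k n c
  proof (rule pred_atom[OF sp dy_nonneg])
    have "X (dy k n) \<in> borel_measurable (F (dy k n))"
      using X_meas_F[OF uf ad dy_nonneg order_refl] .
    thus "{\<omega> \<in> space M. \<not> \<bar>X (dy k n) \<omega> - b (dy k n)\<bar> \<le> c} \<in> sets (F (dy k n))"
      by (intro F_set[OF uf dy_nonneg] pred_intros_logic(2) pred_abs_le_c meas_diff_c)
  qed
  have a3: "Measurable.pred (pred_sigma M F) (\<lambda>x. dy k n < snd x \<and> \<not> G X b (fst x) (dy k n))" for k n
  proof (rule pred_atom[OF sp dy_nonneg])
    show "{\<omega> \<in> space M. \<not> G X b \<omega> (dy k n)} \<in> sets (F (dy k n))"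
      by (rule F_set[OF uf dy_nonneg]) (intro pred_intros_logic G_pred_F[OF uf ad dy_nonneg])
  qed
  show ?thesis unfolding eq
    apply (rule pred_intros_logic(3))
     apply (rule a0)
    apply (rule pred_intros_logic(3))
     apply (rule pred_intros_countable(1))
     apply (rule pred_intros_countable(2))
     apply (rule pred_intros_countable(2))
     apply (rule pred_intros_logic(3))
      apply (rule a1)
     apply (rule pred_intros_countable(1))
     apply (rule pred_intros_countable(1))
     apply (rule pred_intros_imp')
     apply (rule pred_intros_logic(2))
     apply (rule a2)
    apply (rule pred_intros_countable(1))
    apply (rule pred_intros_countable(1))
    apply (rule pred_intros_logic(2))
    apply (rule a3)
    done
qed

lemma G_fail:
  assumes LL: "LL X b \<omega> t" and t: "0 < t" and r: "t \<le> r"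
  shows "\<not> G X b \<omega> r"
proof
  assume "G X b \<omega> r"
  then obtain m :: nat where m: "\<forall>k n. dy k n \<le> r \<longrightarrow> X (dy k n) \<omega> - b (dy k n) \<le> - 1 / (real m + 1)"
    unfolding G_def by blast
  obtain k n where kn: "dy k n < t" and
    cl: "\<forall>k' n'. dy k n < dy k' n' \<longrightarrow> dy k' n' < t \<longrightarrow> \<bar>X (dy k' n') \<omega> - b (dy k' n')\<bar> \<le> 1 / (real (2*m+1) + 1)"
    using LL unfolding LL_def by blast
  obtain k' n' where q: "dy k n < dy k' n'" "dy k' n' < t" using dy_dense[OF t kn] by blast
  have a: "X (dy k' n') \<omega> - b (dy k' n') \<le> - 1 / (real m + 1)" using m q r by auto
  have c: "\<bar>X (dy k' n') \<omega> - b (dy k' n')\<bar> \<le> 1 / (real (2*m+1) + 1)" using cl q by blast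
  have "1 / (real (2*m+1) + 1) < 1 / (real m + 1)" by (simp add: field_simps)
  thus False using a c by linarith
qed

lemma p1_unique:
  assumes "p1 X b \<omega> t" "p1 X b \<omega> t'"
  shows "t = t'"
proof -
  have *: False if asm: "p1 X b \<omega> t1" "p1 X b \<omega> t2" "t1 < t2" for t1 t2
  proof -
    have t1: "0 < t1" "LL X b \<omega> t1" using asm(1) by (auto simp: p1_def)
    have t2: "0 < t2" using t1 asm(3) by simp
    obtain k n where "t1 < dy k n" "dy k n < t2" using dy_dense[OF t2 asm(3)] by blast
    moreover have "\<forall>k n. dy k n < t2 \<longrightarrow> G X b \<omega> (dy k n)" using asm(2) by (simp add: p1_def)
    ultimately show False using G_fail[OF t1(2) t1(1), of "dy k n"] by auto
  qed
  show ?thesis using *[OF assms] *[OF assms(2,1)] by (cases t t' rule: linorder_cases) auto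
qed

lemma LL_left_lim:
  assumes cad: "cadlag (\<lambda>s. X s \<omega>)" and bc: "continuous_on {0..} b" and t: "0 < t"
    and LL: "LL X b \<omega> t"
  shows "left_lim (\<lambda>s. X s \<omega>) t = b t"
proof -
  obtain l where l: "((\<lambda>s. X s \<omega>) \<longlongrightarrow> l) (at_left t)" using cad t by (auto simp: cadlag_def)
  define Y where "Y s = X s \<omega> - b s" for s
  have Yl: "(Y \<longlongrightarrow> l - b t) (at_left t)" unfolding Y_def using l b_left[OF bc t] by (intro tendsto_diff)
  have bnd: "\<bar>l - b t\<bar> \<le> 1 / (real m + 1)" for m :: nat
  proof (rule ccontr)
    assume "\<not> ?thesis"
    hence gt: "1 / (real m + 1) < \<bar>l - b t\<bar>" by simp
    define e where "e = \<bar>l - b t\<bar> - 1 / (real m + 1)"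
    have e: "e > 0" using gt by (simp add: e_def)
    have "eventually (\<lambda>s. dist (Y s) (l - b t) < e) (at_left t)" using Yl e by (rule tendstoD)
    then obtain b1 where b1: "b1 < t" "\<forall>y>b1. y < t \<longrightarrow> dist (Y y) (l - b t) < e"
      unfolding eventually_at_left_field by auto
    obtain k n where kn: "dy k n < t" and
      cl: "\<forall>k' n'. dy k n < dy k' n' \<longrightarrow> dy k' n' < t \<longrightarrow> \<bar>X (dy k' n') \<omega> - b (dy k' n')\<bar> \<le> 1 / (real m + 1)"
      using LL unfolding LL_def by blast
    have mx: "max b1 (dy k n) < t" using b1 kn by simp
    obtain k' n' where q: "max b1 (dy k n) < dy k' n'" "dy k' n' < t" using dy_dense[OF t mx] by blast
    have "\<bar>Y (dy k' n')\<bar> \<le> 1 / (real m + 1)" using cl q unfolding Y_def by auto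
    moreover have "dist (Y (dy k' n')) (l - b t) < e" using b1 q by auto
    ultimately show False unfolding e_def dist_real_def by linarith
  qed
  have "l - b t = 0"
  proof (rule ccontr)
    assume "l - b t \<noteq> 0"
    hence "\<bar>l - b t\<bar> > 0" by simp
    then obtain m where m: "inverse (real (Suc m)) < \<bar>l - b t\<bar>" using reals_Archimedean by blast
    thus False using bnd[of m] by (simp add: inverse_eq_divide add.commute)
  qed
  thus ?thesis unfolding left_lim_def using t l by (simp add: tendsto_Lim)
qed

lemma left_lim_LL:
  assumes cad: "cadlag (\<lambda>s. X s \<omega>)" and bc: "continuous_on {0..} b" and t: "0 < t"
    and ll: "left_lim (\<lambda>s. X s \<omega>) t = b t"
  shows "LL X b \<omega> t"
  unfolding LL_def
proof
  fix m :: nat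
  obtain l where l: "((\<lambda>s. X s \<omega>) \<longlongrightarrow> l) (at_left t)" using cad t by (auto simp: cadlag_def)
  have "l = b t" using ll l t unfolding left_lim_def by (simp add: tendsto_Lim)
  hence Yl: "((\<lambda>s. X s \<omega> - b s) \<longlongrightarrow> 0) (at_left t)" using l b_left[OF bc t] tendsto_diff by fastforce
  have "eventually (\<lambda>s. dist (X s \<omega> - b s) 0 < 1 / (real m + 1)) (at_left t)" using Yl by (rule tendstoD) simp
  then obtain b1 where b1: "b1 < t" "\<forall>y>b1. y < t \<longrightarrow> dist (X y \<omega> - b y) 0 < 1 / (real m + 1)"
    unfolding eventually_at_left_field by auto
  obtain k n where kn: "b1 < dy k n" "dy k n < t" using dy_dense[OF t b1(1)] by blast
  show "\<exists>k n. dy k n < t \<and> (\<forall>k' n'. dy k n < dy k' n' \<longrightarrow> dy k' n' < t \<longrightarrow>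
      \<bar>X (dy k' n') \<omega> - b (dy k' n')\<bar> \<le> 1 / (real m + 1))"
    using kn b1 by (intro exI[of _ k] exI[of _ n]) (auto simp: dist_real_def intro: less_imp_le)
qed

definition RC :: "(real \<Rightarrow> 'a \<Rightarrow> real) \<Rightarrow> (real \<Rightarrow> real) \<Rightarrow> 'a \<Rightarrow> real \<Rightarrow> bool" where
  "RC X b \<omega> t \<longleftrightarrow> (\<exists>m::nat. \<exists>k n. t < dy k n \<and> (\<forall>k' n'. t < dy k' n' \<longrightarrow> dy k' n' < dy k n \<longrightarrow>
      X (dy k' n') \<omega> - b (dy k' n') \<le> - 1 / (real m + 1)))"

lemma Y_right:
  assumes cad: "cadlag (\<lambda>s. X s \<omega>)" and bc: "continuous_on {0..} b" and t: "0 \<le> t"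
  shows "((\<lambda>s. X s \<omega> - b s) \<longlongrightarrow> X t \<omega> - b t) (at_right t)"
proof -
  have "continuous (at_right t) (\<lambda>s. X s \<omega>)" using cad t by (simp add: cadlag_def)
  hence "((\<lambda>s. X s \<omega>) \<longlongrightarrow> X t \<omega>) (at_right t)" by (simp add: continuous_within)
  thus ?thesis using b_right[OF bc t] by (intro tendsto_diff)
qed

lemma RC_iff:
  assumes cad: "cadlag (\<lambda>s. X s \<omega>)" and bc: "continuous_on {0..} b" and t: "0 \<le> t"
  shows "RC X b \<omega> t \<longleftrightarrow> X t \<omega> - b t < 0"
proof
  assume "RC X b \<omega> t"
  then obtain m k n where kn: "t < dy k n" and
    cl: "\<forall>k' n'. t < dy k' n' \<longrightarrow> dy k' n' < dy k n \<longrightarrow> X (dy k' n') \<omega> - b (dy k' n') \<le> - 1 / (real m + 1)"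
    unfolding RC_def by blast
  have "X t \<omega> - b t \<le> - 1 / (real m + 1)"
  proof (rule ccontr)
    assume "\<not> ?thesis"
    hence "- 1 / (real m + 1) < X t \<omega> - b t" by simp
    hence "eventually (\<lambda>s. - 1 / (real m + 1) < X s \<omega> - b s) (at_right t)"
      by (rule order_tendstoD(1)[OF Y_right[of X \<omega> b t, OF cad bc t]])
    then obtain b2 where b2: "b2 > t" "\<forall>y>t. y < b2 \<longrightarrow> - 1 / (real m + 1) < X y \<omega> - b y"
      unfolding eventually_at_right_field by auto
    have pos: "0 < min b2 (dy k n)" using b2 kn t by simp
    obtain k' n' where q: "t < dy k' n'" "dy k' n' < min b2 (dy k n)" using dy_dense[OF pos] b2 kn by force
    show False using cl q b2 by force
  qed
  moreover have "0 < 1 / (real m + 1)" by simp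
  ultimately show "X t \<omega> - b t < 0" by linarith
next
  assume neg: "X t \<omega> - b t < 0"
  hence "eventually (\<lambda>s. X s \<omega> - b s < (X t \<omega> - b t) / 2) (at_right t)"
    using Y_right[of X \<omega> b t, OF cad bc t] by (intro order_tendstoD) auto
  then obtain b2 where b2: "b2 > t" "\<forall>y>t. y < b2 \<longrightarrow> X y \<omega> - b y < (X t \<omega> - b t) / 2"
    unfolding eventually_at_right_field by auto
  have "0 < - (X t \<omega> - b t) / 2" using neg by simp
  then obtain m where m: "inverse (real (Suc m)) < - (X t \<omega> - b t) / 2" using reals_Archimedean by blast
  hence m': "1 / (real m + 1) < - (X t \<omega> - b t) / 2" by (simp add: inverse_eq_divide add.commute)
  have pos: "0 < b2" using b2 t by simp
  obtain k n where kn: "t < dy k n" "dy k n < b2" using dy_dense[OF pos b2(1)] by blast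
  have "\<forall>k' n'. t < dy k' n' \<longrightarrow> dy k' n' < dy k n \<longrightarrow> X (dy k' n') \<omega> - b (dy k' n') \<le> - 1 / (real m + 1)"
  proof (intro allI impI)
    fix k' n' assume "t < dy k' n'" "dy k' n' < dy k n"
    hence "X (dy k' n') \<omega> - b (dy k' n') < (X t \<omega> - b t) / 2" using b2 kn by auto
    thus "X (dy k' n') \<omega> - b (dy k' n') \<le> - 1 / (real m + 1)" using m' by simp
  qed
  thus "RC X b \<omega> t" unfolding RC_def using kn(1) by blast
qed

definition sigE :: "(real \<Rightarrow> 'a \<Rightarrow> real) \<Rightarrow> (real \<Rightarrow> real) \<Rightarrow> 'a \<Rightarrow> ereal" where
  "sigE X b \<omega> = (SUP kn\<in>UNIV. if G X b \<omega> (dy (fst kn) (snd kn)) then ereal (dy (fst kn) (snd kn)) else 0)"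

definition sig :: "(real \<Rightarrow> 'a \<Rightarrow> real) \<Rightarrow> (real \<Rightarrow> real) \<Rightarrow> 'a \<Rightarrow> real" where
  "sig X b \<omega> = real_of_ereal (sigE X b \<omega>)"

lemma sigE_nonneg: "0 \<le> sigE X b \<omega>"
  unfolding sigE_def by (rule SUP_upper2[of "(0,0)"]) (auto simp: dy_def)

lemma sig_nonneg: "0 \<le> sig X b \<omega>"
  unfolding sig_def using sigE_nonneg[of X b \<omega>] by (cases "sigE X b \<omega>") auto

lemma sig_eq:
  assumes "p1 X b \<omega> t"
  shows "sig X b \<omega> = t"
proof -
  have t: "0 < t" "LL X b \<omega> t" and pre: "\<forall>k n. dy k n < t \<longrightarrow> G X b \<omega> (dy k n)"
    using assms by (auto simp: p1_def)
  have "sigE X b \<omega> = ereal t"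
  proof (rule antisym)
    show "sigE X b \<omega> \<le> ereal t" unfolding sigE_def
    proof (rule SUP_least)
      fix kn :: "nat \<times> nat"
      show "(if G X b \<omega> (dy (fst kn) (snd kn)) then ereal (dy (fst kn) (snd kn)) else 0) \<le> ereal t"
      proof (cases "G X b \<omega> (dy (fst kn) (snd kn))")
        case True
        hence "\<not> t \<le> dy (fst kn) (snd kn)" using G_fail[OF t(2) t(1)] by blast
        thus ?thesis using True by simp
      next
        case False thus ?thesis using t by simp
      qed
    qed
    show "ereal t \<le> sigE X b \<omega>" unfolding sigE_def le_SUP_iff
    proof (intro allI impI)
      fix y assume y: "y < ereal t"
      show "\<exists>i\<in>UNIV. y < (if G X b \<omega> (dy (fst i) (snd i)) then ereal (dy (fst i) (snd i)) else 0)"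
      proof (cases y)
        case (real y')
        hence "y' < t" using y by simp
        then obtain k n where kn: "y' < dy k n" "dy k n < t" using dy_dense[OF t(1)] by blast
        thus ?thesis using pre real by (intro bexI[of _ "(k,n)"]) auto
      next
        case PInf thus ?thesis using y by simp
      next
        case MInf thus ?thesis by (intro bexI[of _ "(0,0)"]) auto
      qed
    qed
  qed
  thus ?thesis by (simp add: sig_def)
qed

lemma pred_less_c: "(f :: 'a \<Rightarrow> real) \<in> borel_measurable N \<Longrightarrow> Measurable.pred N (\<lambda>x. f x < c)"
  unfolding pred_def by (rule borel_measurable_less) auto

lemma pred_eq0_enn: "(f :: 'a \<Rightarrow> ennreal) \<in> borel_measurable N \<Longrightarrow> Measurable.pred N (\<lambda>x. f x = 0)"
  unfolding pred_def by (rule borel_measurable_eq) auto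

definition W0 :: "(real \<Rightarrow> 'a \<Rightarrow> real) \<Rightarrow> (real \<Rightarrow> real) \<Rightarrow> 'a \<Rightarrow> real \<Rightarrow> real \<Rightarrow> ennreal" where
  "W0 X b \<omega> t x = (if p1 X b \<omega> t \<and> x < 0 then 1 else 0)"

definition RR where "RR X b \<nu> \<omega> t = rm_int (W0 X b) \<nu> \<omega> t"

definition W1 :: "(real \<Rightarrow> 'a \<Rightarrow> real) \<Rightarrow> (real \<Rightarrow> real) \<Rightarrow> ('a \<Rightarrow> (real \<times> real) measure) \<Rightarrow> 'a \<Rightarrow> real \<Rightarrow> real \<Rightarrow> ennreal" where
  "W1 X b \<nu> \<omega> t x = (if p1 X b \<omega> t \<and> x < 0 \<and> RR X b \<nu> \<omega> t = 0 then 1 else 0)"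

lemma W0_pred:
  assumes uf: "usual_filtration M F" and ad: "adapted M F X"
  shows "predictable_fun M F (W0 X b)"
proof -
  have P: "Measurable.pred (pred_sigma M F \<Otimes>\<^sub>M borel) (\<lambda>y. p1 X b (fst (fst y)) (snd (fst y)) \<and> snd y < (0::real))"
    apply (rule pred_intros_logic(3))
     apply (rule measurable_compose[OF measurable_fst p1_pred[OF uf ad]])
    apply (rule pred_less_c)
    apply (rule measurable_snd)
    done
  have eq: "(\<lambda>((\<omega>, t), x). W0 X b \<omega> t x) = (\<lambda>y. if p1 X b (fst (fst y)) (snd (fst y)) \<and> snd y < 0 then 1 else 0)"
    by (auto simp: W0_def fun_eq_iff)
  show ?thesis unfolding predictable_fun_def eq
    by (rule measurable_If[OF measurable_const measurable_const predE[OF P]]) simp_all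
qed

lemma RR_meas:
  assumes uf: "usual_filtration M F" and ad: "adapted M F X" and prm: "predictable_random_measure M F \<nu>"
  shows "(\<lambda>x. RR X b \<nu> (fst x) (snd x)) \<in> borel_measurable (pred_sigma M F)"
proof -
  have "(\<lambda>(\<omega>, t). rm_int (W0 X b) \<nu> \<omega> t) \<in> borel_measurable (pred_sigma M F)"
    using prm W0_pred[OF uf ad] unfolding predictable_random_measure_def by blast
  thus ?thesis by (simp add: RR_def split_beta')
qed

lemma W1_pred:
  assumes uf: "usual_filtration M F" and ad: "adapted M F X" and prm: "predictable_random_measure M F \<nu>"
  shows "predictable_fun M F (W1 X b \<nu>)"
proof -
  have P: "Measurable.pred (pred_sigma M F \<Otimes>\<^sub>M borel) (\<lambda>y. p1 X b (fst (fst y)) (snd (fst y)) \<and> snd y < (0::real)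
      \<and> RR X b \<nu> (fst (fst y)) (snd (fst y)) = 0)"
    apply (rule pred_intros_logic(3))
     apply (rule measurable_compose[OF measurable_fst p1_pred[OF uf ad]])
    apply (rule pred_intros_logic(3))
    apply (rule pred_less_c)
     apply (rule measurable_snd)
    apply (rule pred_eq0_enn)
    apply (rule measurable_compose[OF measurable_fst RR_meas[OF uf ad prm]])
    done
  have eq: "(\<lambda>((\<omega>, t), x). W1 X b \<nu> \<omega> t x) = (\<lambda>y. if p1 X b (fst (fst y)) (snd (fst y)) \<and> snd y < 0
      \<and> RR X b \<nu> (fst (fst y)) (snd (fst y)) = 0 then 1 else 0)"
    by (auto simp: W1_def fun_eq_iff)
  show ?thesis unfolding predictable_fun_def eq
    by (rule measurable_If[OF measurable_const measurable_const predE[OF P]]) simp_all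
qed

lemma G_pred_M:
  assumes uf: "usual_filtration M F" and ad: "adapted M F X" and d: "0 \<le> d"
  shows "Measurable.pred M (\<lambda>\<omega>. G X b \<omega> d)"
proof -
  have "subalgebra M (F d)" unfolding subalgebra_def
    using uf_space[OF uf d] uf_sets[OF uf d] by simp
  thus ?thesis using G_pred_F[OF uf ad d] by (rule measurable_from_subalg)
qed

lemma sig_meas:
  assumes uf: "usual_filtration M F" and ad: "adapted M F X"
  shows "sig X b \<in> borel_measurable M"
proof -
  have "sigE X b \<in> borel_measurable M" unfolding sigE_def
  proof (rule borel_measurable_SUP)
    fix kn :: "nat \<times> nat"
    show "(\<lambda>x. if G X b x (dy (fst kn) (snd kn)) then ereal (dy (fst kn) (snd kn)) else 0) \<in> borel_measurable M"
      by (rule measurable_If[OF measurable_const measurable_const predE[OF G_pred_M[OF uf ad dy_nonneg]]]) simp_all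
  qed simp
  thus ?thesis unfolding sig_def[abs_def] by (rule borel_measurable_real_of_ereal)
qed

lemma phi_meas:
  fixes F :: "real \<Rightarrow> 'a measure"
  assumes uf: "usual_filtration M F" and ad: "adapted M F X"
  shows "(\<lambda>\<omega>. (\<omega>, sig X b \<omega>)) \<in> measurable M (pred_sigma M F)"
proof -
  have sp: "\<forall>t\<ge>0. space (F t) = space M" using uf_space[OF uf] by blast
  have sm: "sig X b \<in> borel_measurable M" by (rule sig_meas[OF uf ad])
  show ?thesis unfolding pred_sigma_def
  proof (rule measurable_measure_of[OF pred_gen_subset[OF sp]])
    show "(\<lambda>\<omega>. (\<omega>, sig X b \<omega>)) \<in> space M \<rightarrow> space M \<times> {0..}" using sig_nonneg by auto
    fix Z assume "Z \<in> {A \<times> {0} | A. A \<in> sets (F 0)} \<union> {A \<times> {s<..t} | A s t. 0 \<le> s \<and> s \<le> t \<and> A \<in> sets (F s)}"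
    then consider (a) A where "Z = A \<times> {0}" "A \<in> sets (F 0)"
      | (b) A s t where "Z = A \<times> {s<..t}" "0 \<le> s" "A \<in> sets (F s)" by blast
    then show "(\<lambda>\<omega>. (\<omega>, sig X b \<omega>)) -` Z \<inter> space M \<in> sets M"
    proof cases
      case a
      have AM: "A \<in> sets M" using a uf_sets[OF uf, of 0] by auto
      have "(\<lambda>\<omega>. (\<omega>, sig X b \<omega>)) -` Z \<inter> space M = A \<inter> {\<omega> \<in> space M. sig X b \<omega> = 0}"
        using a by auto
      also have "\<dots> \<in> sets M" using AM borel_measurable_eq[OF sm measurable_const] by auto
      finally show ?thesis .
    next
      case b
      have AM: "A \<in> sets M" using b uf_sets[OF uf, of s] by auto
      have "(\<lambda>\<omega>. (\<omega>, sig X b \<omega>)) -` Z \<inter> space M = A \<inter> ({\<omega> \<in> space M. s < sig X b \<omega>} \<inter> {\<omega> \<in> space M. sig X b \<omega> \<le> t})"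
        using b by auto
      also have "\<dots> \<in> sets M"
        using AM borel_measurable_less[OF measurable_const sm] borel_measurable_le[OF sm measurable_const] by auto
      finally show ?thesis .
    qed
  qed
qed

definition Eset where
  "Eset M X b \<nu> = {\<omega> \<in> space M. p1 X b \<omega> (sig X b \<omega>) \<and> RC X b \<omega> (sig X b \<omega>) \<and> RR X b \<nu> \<omega> (sig X b \<omega>) = 0}"

lemma Eset_sets:
  assumes uf: "usual_filtration M F" and ad: "adapted M F X" and prm: "predictable_random_measure M F \<nu>"
  shows "Eset M X b \<nu> \<in> sets M"
proof -
  have sm: "sig X b \<in> borel_measurable M" by (rule sig_meas[OF uf ad])
  have P1: "Measurable.pred M (\<lambda>\<omega>. p1 X b \<omega> (sig X b \<omega>))"
    using measurable_compose[OF phi_meas[OF uf ad] p1_pred[OF uf ad]] by simp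
  have R1: "Measurable.pred M (\<lambda>\<omega>. RR X b \<nu> \<omega> (sig X b \<omega>) = 0)"
    using measurable_compose[OF phi_meas[OF uf ad] RR_meas[OF uf ad prm]] by (intro pred_eq0_enn) simp
  have Xm: "(\<lambda>\<omega>. X (dy k n) \<omega> - b (dy k n)) \<in> borel_measurable M" for k n
    by (intro meas_diff_c X_meas_M[OF uf ad dy_nonneg])
  have RC1: "Measurable.pred M (\<lambda>\<omega>. RC X b \<omega> (sig X b \<omega>))" unfolding RC_def
    apply (rule pred_intros_countable(2))
    apply (rule pred_intros_countable(2))
    apply (rule pred_intros_countable(2))
    apply (rule pred_intros_logic(3))
     apply (rule pred_less_c[OF sm])
    apply (rule pred_intros_countable(1))
    apply (rule pred_intros_countable(1))
    apply (rule pred_intros_logic(4))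
     apply (rule pred_less_c[OF sm])
    apply (rule pred_intros_imp')
    apply (rule pred_le_c[OF Xm])
    done
  have "Measurable.pred M (\<lambda>\<omega>. p1 X b \<omega> (sig X b \<omega>) \<and> RC X b \<omega> (sig X b \<omega>) \<and> RR X b \<nu> \<omega> (sig X b \<omega>) = 0)"
    using P1 RC1 R1 by (intro pred_intros_logic(3))
  thus ?thesis unfolding Eset_def pred_def .
qed

lemma sm_adapted: "semimartingale M F X \<Longrightarrow> adapted M F X"
  unfolding semimartingale_def by (drule conjunct1)
lemma sm_cadlag: "semimartingale M F X \<Longrightarrow> cadlag_process M X"
  unfolding semimartingale_def by (drule conjunct2, drule conjunct1)
lemma comp_prm: "compensator M F \<mu> \<nu> \<Longrightarrow> predictable_random_measure M F \<nu>"
  unfolding compensator_def by (drule conjunct1)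
lemma comp_eq: "compensator M F \<mu> \<nu> \<Longrightarrow> predictable_fun M F W \<Longrightarrow>
    (\<integral>\<^sup>+ \<omega>. rm_int_inf W \<mu> \<omega> \<partial>M) = (\<integral>\<^sup>+ \<omega>. rm_int_inf W \<nu> \<omega> \<partial>M)"
  unfolding compensator_def by (drule conjunct2) blast

lemma hit_neg:
  assumes "ereal t < hit_time X b \<omega>" "0 \<le> s" "s \<le> t"
  shows "X s \<omega> - b s < 0"
proof (rule ccontr)
  assume "\<not> ?thesis"
  hence "s \<in> {t. 0 \<le> t \<and> X t \<omega> - b t \<ge> 0}" using assms by auto
  hence "hit_time X b \<omega> \<le> ereal s" unfolding hit_time_def by (rule INF_lower)
  also have "ereal s \<le> ereal t" using assms by simp
  finally show False using leD assms(1) by blast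
qed

lemma nu_zero: "rm_int_inf (W1 X b \<nu>) \<nu> \<omega> = 0"
proof (cases "\<exists>t x. W1 X b \<nu> \<omega> t x \<noteq> 0")
  case True
  then obtain t0 x0 where "W1 X b \<nu> \<omega> t0 x0 \<noteq> 0" by blast
  hence t0: "p1 X b \<omega> t0" "RR X b \<nu> \<omega> t0 = 0" by (auto simp: W1_def split: if_splits)
  have "rm_int_inf (W1 X b \<nu>) \<nu> \<omega> \<le> (\<integral>\<^sup>+ z. indicator {0..t0} (fst z) * W0 X b \<omega> (fst z) (snd z) \<partial>\<nu> \<omega>)"
    unfolding rm_int_inf_def
  proof (intro nn_integral_mono)
    fix z :: "real \<times> real"
    show "indicator {0..} (fst z) * W1 X b \<nu> \<omega> (fst z) (snd z) \<le> indicator {0..t0} (fst z) * W0 X b \<omega> (fst z) (snd z)"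
    proof (cases "W1 X b \<nu> \<omega> (fst z) (snd z) = 0")
      case False
      hence "p1 X b \<omega> (fst z)" "snd z < 0" by (auto simp: W1_def split: if_splits)
      moreover have "fst z = t0" using p1_unique[OF calculation(1) t0(1)] .
      ultimately show ?thesis by (auto simp: W1_def W0_def split: split_indicator)
    qed simp
  qed
  also have "\<dots> = 0" using t0(2) by (simp add: RR_def rm_int_def)
  finally show ?thesis by simp
next
  case False
  thus ?thesis unfolding rm_int_inf_def by simp
qed

lemma E_lb:
  assumes cad: "cadlag (\<lambda>s. X s \<omega>)" and bc: "continuous_on {0..} b" and E: "\<omega> \<in> Eset M X b \<nu>"
  shows "1 \<le> rm_int_inf (W1 X b \<nu>) (jump_measure X) \<omega>"
proof -
  define t where "t = sig X b \<omega>"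
  have h: "p1 X b \<omega> t" "RC X b \<omega> t" "RR X b \<nu> \<omega> t = 0" using E by (auto simp: Eset_def t_def)
  have tp: "0 < t" "LL X b \<omega> t" using h(1) by (auto simp: p1_def)
  have ll: "left_lim (\<lambda>s. X s \<omega>) t = b t" by (rule LL_left_lim[of X \<omega> b t, OF cad bc tp(1) tp(2)])
  have neg: "X t \<omega> - b t < 0" using RC_iff[of X \<omega> b t, OF cad bc] tp h(2) by simp
  have j: "jump (\<lambda>s. X s \<omega>) t = X t \<omega> - b t" by (simp add: jump_def ll)
  have "W1 X b \<nu> \<omega> t (jump (\<lambda>s. X s \<omega>) t) = 1" using h neg j by (simp add: W1_def)
  moreover have "W1 X b \<nu> \<omega> t (jump (\<lambda>s. X s \<omega>) t) \<le> rm_int_inf (W1 X b \<nu>) (jump_measure X) \<omega>"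
    by (rule rm_int_inf_jump_lb) (use tp neg j in auto)
  ultimately show ?thesis by simp
qed

theorem proposition3p7:
  fixes M :: "'a measure" and F :: "real \<Rightarrow> 'a measure"
    and X :: "real \<Rightarrow> 'a \<Rightarrow> real" and b :: "real \<Rightarrow> real"
    and \<nu> :: "'a \<Rightarrow> (real \<times> real) measure"
  assumes "usual_filtration M F"
    and "semimartingale M F X"
    and "continuous_on {0..} b"
    and "\<forall>\<omega>\<in>space M. X 0 \<omega> < b 0"
    and "compensator M F (jump_measure X) \<nu>"
    and "AE \<omega> in M. \<forall>t\<ge>0.
           rm_int (\<lambda>\<omega> s x. indicator (Gamma_minus M X b) (\<omega>, s, x)) \<nu> \<omega> t = 0"
  shows "AE \<omega> in M. \<forall>t\<ge>0. ereal t < hit_time X b \<omega> \<longrightarrow>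
           (SUP s\<in>{0..t}. X s \<omega> - b s) < 0"
proof -
  note uf = assms(1) and bc = assms(3) and comp = assms(5)
  have ad: "adapted M F X" by (rule sm_adapted[OF assms(2)])
  have cadp: "cadlag_process M X" by (rule sm_cadlag[OF assms(2)])
  have prm: "predictable_random_measure M F \<nu>" by (rule comp_prm[OF comp])
  define E where "E = Eset M X b \<nu>"
  have Es: "E \<in> sets M" unfolding E_def by (rule Eset_sets[OF uf ad prm])
  have int0: "(\<integral>\<^sup>+ \<omega>. rm_int_inf (W1 X b \<nu>) (jump_measure X) \<omega> \<partial>M) = 0"
    using comp_eq[OF comp W1_pred[OF uf ad prm]] by (simp add: nu_zero)
  have "emeasure M E = (\<integral>\<^sup>+ \<omega>. indicator E \<omega> \<partial>M)" using Es by simp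
  also have "\<dots> \<le> (\<integral>\<^sup>+ \<omega>. rm_int_inf (W1 X b \<nu>) (jump_measure X) \<omega> \<partial>M)"
  proof (intro nn_integral_mono)
    fix \<omega> assume "\<omega> \<in> space M"
    hence cad: "cadlag (\<lambda>s. X s \<omega>)" using cadp by (simp add: cadlag_process_def)
    show "indicator E \<omega> \<le> rm_int_inf (W1 X b \<nu>) (jump_measure X) \<omega>"
      using E_lb[of X \<omega> b M \<nu>, OF cad bc] unfolding E_def by (auto split: split_indicator)
  qed
  finally have "emeasure M E = 0" using int0 by simp
  hence "E \<in> null_sets M" using Es by auto
  hence AE2: "AE \<omega> in M. \<omega> \<notin> E" by (rule AE_not_in)
  show ?thesis
    using assms(6) AE2 AE_space[of M]
  proof eventually_elim
    case (elim \<omega>)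
    hence hyp: "\<forall>t\<ge>0. rm_int (\<lambda>\<omega> s x. indicator (Gamma_minus M X b) (\<omega>, s, x)) \<nu> \<omega> t = 0"
      and nE: "\<omega> \<notin> E" and sp: "\<omega> \<in> space M" by auto
    have cad: "cadlag (\<lambda>s. X s \<omega>)" using cadp sp by (simp add: cadlag_process_def)
    show ?case
    proof (intro allI impI)
      fix t :: real assume t0: "0 \<le> t" and th: "ereal t < hit_time X b \<omega>"
      show "(SUP s\<in>{0..t}. X s \<omega> - b s) < 0"
      proof (rule ccontr)
        assume nsup: "\<not> (SUP s\<in>{0..t}. X s \<omega> - b s) < 0"
        have neg: "\<forall>s\<in>{0..t}. X s \<omega> - b s < 0" using hit_neg[OF th] by auto
        obtain u where u: "0 < u" "u \<le> t" "left_lim (\<lambda>s. X s \<omega>) u = b u"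
          and pre: "\<forall>r. 0 \<le> r \<and> r < u \<longrightarrow> (\<exists>m::nat. \<forall>q. 0 \<le> q \<and> q \<le> r \<longrightarrow> X q \<omega> - b q \<le> - 1 / (real m + 1))"
          using pathwise[of "\<lambda>s. X s \<omega>" b t, OF cad bc t0 neg nsup] by blast
        have LLu: "LL X b \<omega> u" by (rule left_lim_LL[of X \<omega> b u, OF cad bc u(1) u(3)])
        have Gs: "G X b \<omega> (dy k n)" if dk: "dy k n < u" for k n
        proof -
          have "0 \<le> dy k n \<and> dy k n < u" using dy_nonneg[of k n] dk by simp
          then obtain m :: nat where m: "\<forall>q. 0 \<le> q \<and> q \<le> dy k n \<longrightarrow> X q \<omega> - b q \<le> - 1 / (real m + 1)"
            using pre[rule_format] by metis
          have "\<forall>k' n'. dy k' n' \<le> dy k n \<longrightarrow> X (dy k' n') \<omega> - b (dy k' n') \<le> - 1 / (real m + 1)"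
            using m dy_nonneg by simp
          thus ?thesis unfolding G_def by (rule exI)
        qed
        have p1u: "p1 X b \<omega> u" unfolding p1_def using u(1) LLu Gs by simp
        have sigu: "sig X b \<omega> = u" by (rule sig_eq[OF p1u])
        have RCu: "RC X b \<omega> u" using RC_iff[of X \<omega> b u, OF cad bc] u neg by auto
        have "RR X b \<nu> \<omega> u \<le> rm_int (\<lambda>\<omega> s x. indicator (Gamma_minus M X b) (\<omega>, s, x)) \<nu> \<omega> u"
          unfolding RR_def rm_int_def
        proof (intro nn_integral_mono)
          fix z :: "real \<times> real"
          show "indicator {0..u} (fst z) * W0 X b \<omega> (fst z) (snd z)
              \<le> indicator {0..u} (fst z) * indicator (Gamma_minus M X b) (\<omega>, fst z, snd z)"
          proof (cases "W0 X b \<omega> (fst z) (snd z) = 0")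
            case False
            hence pz: "p1 X b \<omega> (fst z)" "snd z < 0" by (auto simp: W0_def split: if_splits)
            have fz: "fst z = u" using p1_unique[OF pz(1) p1u] .
            have "ereal u < hit_time X b \<omega>" using th u(2) le_less_trans[of "ereal u" "ereal t"] by simp
            hence "(\<omega>, fst z, snd z) \<in> Gamma_minus M X b"
              unfolding Gamma_minus_def using sp fz u pz(2) by auto
            thus ?thesis by (simp add: W0_def split: split_indicator)
          qed simp
        qed
        also have "\<dots> = 0" using hyp u by simp
        finally have "RR X b \<nu> \<omega> u = 0" by simp
        hence "\<omega> \<in> E" unfolding E_def Eset_def using sp p1u RCu sigu by simp
        thus False using nE by simp
      qed
    qed
  qed
qed

end
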